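(* For every $\alpha\in\bar{\mathbb{Q}}$ we have $H(\alpha)\ge H(H(\alpha))$, with equality if and only if $H(\alpha)=a^b$ for some $a\in\mathbb{N}$ and some rational $b>0$.
   Context: $\bar{\mathbb{Q}}$ is the algebraic closure of $\mathbb{Q}$ in $\mathbb{C}$. $H:\bar{\mathbb{Q}}\to\bar{\mathbb{Q}}\cap[1,\infty)$ is the absolute multiplicative Weil height: for $\alpha$ of degree $d$ with $a_0>0$ the leading coefficient of a minimal polynomial of $\alpha$ in $\mathbb{Z}[t]$ and conjugates $\alpha_1,\dots,\alpha_d$, $H(\alpha)=\big(a_0\prod_i\max\{1,|\alpha_i|\}\big)^{1/d}$ (this value is again algebraic, so $H$ can be iterated). *)

theory Defs
  imports "HOL-Computational_Algebra.Computational_Algebra"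
begin

definition min_int_poly :: "complex \<Rightarrow> int poly" where
  "min_int_poly \<alpha> = (THE p. irreducible p \<and> lead_coeff p > 0 \<and>
       poly (map_poly of_int p) \<alpha> = 0)"

definition weil_height :: "complex \<Rightarrow> real" where
  "weil_height \<alpha> =
     (let p = min_int_poly \<alpha> in
      root (degree p)
        (of_int (lead_coeff p) *
         (\<Prod>z\<in>{z. poly (map_poly of_int p) z = 0}. max 1 (cmod z))))"

end

theory Submission
  imports Defs "Berlekamp_Zassenhaus.Factorize_Int_Poly" "Jordan_Normal_Form.Jordan_Normal_Form"
begin


abbreviation sl :: "nat set \<Rightarrow> nat list" where "sl K \<equiv> sorted_list_of_set K"

definition ksubs :: "nat \<Rightarrow> nat \<Rightarrow> nat set set" where
  "ksubs n k = {K. K \<subseteq> {0..<n} \<and> card K = k}"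

lemma finite_ksubs: "finite (ksubs n k)"
  unfolding ksubs_def by (rule finite_subset[of _ "Pow {0..<n}"]) auto

lemma ksubs_sl: assumes "K \<in> ksubs n k"
  shows "length (sl K) = k" "distinct (sl K)" "set (sl K) = K" "finite K" "K \<subseteq> {0..<n}"
proof -
  from assms have K: "K \<subseteq> {0..<n}" "card K = k" unfolding ksubs_def by auto
  then have f: "finite K" using finite_subset by blast
  then show "length (sl K) = k" "distinct (sl K)" "set (sl K) = K" "finite K" "K \<subseteq> {0..<n}"
    using K by auto
qed

lemma the_nth: assumes "distinct xs" "x \<in> set xs"
  shows "(THE j. j < length xs \<and> xs ! j = x) < length xs \<and> xs ! (THE j. j < length xs \<and> xs ! j = x) = x"
proof -
  from assms(2) obtain j where j: "j < length xs" "xs ! j = x" by (auto simp: in_set_conv_nth)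
  show ?thesis
  proof (rule theI[of _ j])
    show "j < length xs \<and> xs ! j = x" using j by auto
    fix j' assume "j' < length xs \<and> xs ! j' = x"
    then show "j' = j" using j assms(1) nth_eq_iff_index_eq by metis
  qed
qed

lemma cauchy_binet:
  fixes A :: "'a::comm_ring_1 mat"
  assumes A: "A \<in> carrier_mat k n" and B: "B \<in> carrier_mat n k"
  shows "det (A * B) = (\<Sum>K \<in> ksubs n k. det (mat k k (\<lambda>(i,j). A $$ (i, sl K ! j)))
            * det (mat k k (\<lambda>(i,j). B $$ (sl K ! i, j))))"
proof -
  let ?U = "{0..<k}"
  let ?F = "{f. (\<forall>i\<in>?U. f i \<in> {0..<n}) \<and> (\<forall>i. i \<notin> ?U \<longrightarrow> f i = i)}"
  let ?Fi = "{f \<in> ?F. inj_on f ?U}"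
  let ?P = "{p. p permutes ?U}"
  let ?R = "\<lambda>f. mat\<^sub>r k k (\<lambda>i. row B (f i))"
  let ?g = "\<lambda>f. det (mat\<^sub>r k k (\<lambda> i. A $$ (i, f i) \<cdot>\<^sub>v row B (f i)))"
  let ?AK = "\<lambda>K. mat k k (\<lambda>(i,j). A $$ (i, sl K ! j))"
  let ?BK = "\<lambda>K. mat k k (\<lambda>(i,j). B $$ (sl K ! i, j))"
  have fF: "finite ?F" by (rule finite_bounded_functions, auto)
  have step1: "det (A * B) = sum ?g ?F"
    unfolding mat_mul_finsum_alt[OF A B]
    by (rule det_linear_rows_sum, insert A B, auto)
  have g: "?g f = (\<Prod>i\<in>?U. A $$ (i, f i)) * det (?R f)" for f
    by (rule det_rows_mul, insert B, auto)
  have zero: "?g f = 0" if "f \<in> ?F - ?Fi" for f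
  proof -
    from that obtain i j where ij: "i \<in> ?U" "j \<in> ?U" "i \<noteq> j" "f i = f j" unfolding inj_on_def by auto
    have "det (?R f) = 0"
      by (rule det_identical_rows[of _ k i j], insert ij B, auto)
    with g[of f] show ?thesis by auto
  qed
  have step2: "sum ?g ?F = sum ?g ?Fi"
    by (rule sum.mono_neutral_right[OF fF], insert zero, auto)
  define h where "h = (\<lambda>(K,p). \<lambda>i. if i < k then sl K ! (p i) else (i::nat))"
  have img: "h (K,p) ` ?U = K" if K: "K \<in> ksubs n k" and p: "p permutes ?U" for K p
  proof -
    have "h (K,p) ` ?U = (\<lambda>j. sl K ! j) ` (p ` ?U)" unfolding h_def by (auto simp: image_image)
    also have "p ` ?U = ?U" using permutes_image[OF p] .
    also have "(\<lambda>j. sl K ! j) ` ?U = set (sl K)" using ksubs_sl[OF K] nth_image[of k "sl K"] by simp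
    finally show ?thesis using ksubs_sl[OF K] by simp
  qed
  have inj: "inj_on h (ksubs n k \<times> ?P)"
    unfolding inj_on_def
  proof (intro ballI impI)
    fix x y assume x: "x \<in> ksubs n k \<times> ?P" and y: "y \<in> ksubs n k \<times> ?P" and eq: "h x = h y"
    obtain K p where xKp: "x = (K,p)" by (cases x)
    obtain K' p' where yKp: "y = (K',p')" by (cases y)
    from x y xKp yKp have K: "K \<in> ksubs n k" and p: "p permutes ?U"
      and K': "K' \<in> ksubs n k" and p': "p' permutes ?U" by auto
    from img[OF K p] img[OF K' p'] eq xKp yKp have KK: "K = K'" by metis
    have "p = p'"
    proof
      fix i
      show "p i = p' i"
      proof (cases "i < k")
        case True
        from fun_cong[OF eq, of i] True KK xKp yKp have "sl K ! p i = sl K ! p' i" unfolding h_def by simp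
        moreover have "p i < k" "p' i < k" using permutes_in_image[OF p] permutes_in_image[OF p'] True by auto
        ultimately show ?thesis using ksubs_sl(1,2)[OF K] nth_eq_iff_index_eq by metis
      next
        case False
        then show ?thesis using permutes_not_in[OF p] permutes_not_in[OF p'] by auto
      qed
    qed
    with KK xKp yKp show "x = y" by simp
  qed
  have himg: "h ` (ksubs n k \<times> ?P) = ?Fi"
  proof
    have hF: "h (K,p) \<in> ?Fi" if K: "K \<in> ksubs n k" and p: "p permutes ?U" for K p
    proof -
      note sK = ksubs_sl[OF K]
      have pi: "i < k \<Longrightarrow> p i < k" for i using permutes_in_image[OF p] by auto
      have "sl K ! p i \<in> K" if "i < k" for i using pi[OF that] sK by (metis nth_mem)
      hence "\<forall>i\<in>?U. h (K,p) i \<in> {0..<n}" using sK(5) unfolding h_def by force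
      moreover have "\<forall>i. i \<notin> ?U \<longrightarrow> h (K,p) i = i" unfolding h_def by auto
      moreover have "inj_on (h (K,p)) ?U"
        unfolding inj_on_def
      proof (intro ballI impI)
        fix i j assume i: "i \<in> ?U" and j: "j \<in> ?U" and eq: "h (K,p) i = h (K,p) j"
        from eq i j have e1: "sl K ! p i = sl K ! p j" unfolding h_def by auto
        have l: "p i < length (sl K)" "p j < length (sl K)" using pi i j sK(1) by auto
        from e1 l sK(2) have "p i = p j" using nth_eq_iff_index_eq by metis
        then show "i = j" using permutes_inj[OF p] by (simp add: inj_eq)
      qed
      ultimately show "h (K,p) \<in> ?Fi" by blast
    qed
    show "h ` (ksubs n k \<times> ?P) \<subseteq> ?Fi" using hF by auto
    show "?Fi \<subseteq> h ` (ksubs n k \<times> ?P)"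
    proof
      fix f assume f: "f \<in> ?Fi"
      define K where "K = f ` ?U"
      have K: "K \<in> ksubs n k" using f unfolding K_def ksubs_def by (auto simp: card_image)
      note sK = ksubs_sl[OF K]
      define p where "p = (\<lambda>i. if i < k then (THE j. j < length (sl K) \<and> sl K ! j = f i) else i)"
      have fK: "i < k \<Longrightarrow> f i \<in> set (sl K)" for i using sK K_def by auto
      have p: "p permutes ?U"
      proof (rule inj_on_nat_permutes)
        show "inj_on p ?U"
        proof (rule inj_onI)
          fix i j assume i: "i \<in> ?U" and j: "j \<in> ?U" and eq: "p i = p j"
          then have "(THE j. j < length (sl K) \<and> sl K ! j = f i) = (THE j'. j' < length (sl K) \<and> sl K ! j' = f j)" unfolding p_def by auto
          then have "f i = f j" using fK i j by (metis atLeastLessThan_iff the_nth sK(2))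
          then show "i = j" using f i j unfolding inj_on_def by blast
        qed
        show "p \<in> ?U \<rightarrow> ?U"
        proof
          fix i assume i: "i \<in> ?U"
          then show "p i \<in> ?U" using the_nth[OF sK(2) fK[of i]] sK(1) unfolding p_def by auto
        qed
      qed (auto simp: p_def)
      have "h (K,p) = f"
      proof
        fix i show "h (K, p) i = f i"
        proof (cases "i < k")
          case True
          then show ?thesis using the_nth[OF sK(2) fK[of i]] sK(1) unfolding h_def p_def by auto
        next
          case False
          then show ?thesis using f unfolding h_def by auto
        qed
      qed
      then show "f \<in> h ` (ksubs n k \<times> ?P)" using K p by force
    qed
  qed
  have step3: "sum ?g ?Fi = (\<Sum>(K,p) \<in> ksubs n k \<times> ?P. ?g (h (K,p)))"
    unfolding himg[symmetric] by (subst sum.reindex[OF inj], auto)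
  have step4: "?g (h (K,p)) = (\<Prod>i\<in>?U. A $$ (i, sl K ! p i)) * (signof p * det (?BK K))"
    if K: "K \<in> ksubs n k" and p: "p permutes ?U" for K p
  proof -
    note sK = ksubs_sl[OF K]
    have pi: "i < k \<Longrightarrow> p i < k" for i using permutes_in_image[OF p] by auto
    have sKn: "i < k \<Longrightarrow> sl K ! p i < n" for i using pi sK by (metis atLeastLessThan_iff nth_mem subsetD)
    have R: "?R (h (K,p)) = mat k k (\<lambda>(i,j). ?BK K $$ (p i, j))"
      by (rule eq_matI, insert B pi sKn, auto simp: h_def)
    have "det (?R (h (K,p))) = signof p * det (?BK K)"
      unfolding R by (rule det_permute_rows[OF _ p], auto)
    with g[of "h (K,p)"] show ?thesis by (simp add: h_def)
  qed
  have step5: "(\<Sum>p\<in>?P. (\<Prod>i\<in>?U. A $$ (i, sl K ! p i)) * (signof p * det (?BK K))) = det (?AK K) * det (?BK K)"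
    if K: "K \<in> ksubs n k" for K
  proof -
    note sK = ksubs_sl[OF K]
    have "det (?AK K) = (\<Sum>p\<in>?P. signof p * (\<Prod>i\<in>?U. ?AK K $$ (i, p i)))"
      by (rule det_def', auto)
    also have "\<dots> = (\<Sum>p\<in>?P. signof p * (\<Prod>i\<in>?U. A $$ (i, sl K ! p i)))"
    proof (rule sum.cong[OF refl])
      fix p assume "p \<in> ?P"
      then have pi: "i < k \<Longrightarrow> p i < k" for i using permutes_in_image by auto
      show "signof p * (\<Prod>i\<in>?U. ?AK K $$ (i, p i)) = signof p * (\<Prod>i\<in>?U. A $$ (i, sl K ! p i))"
        by (intro arg_cong[where f = "\<lambda>x. signof p * x"] prod.cong, insert pi, auto)
    qed
    finally have dA: "det (?AK K) = (\<Sum>p\<in>?P. signof p * (\<Prod>i\<in>?U. A $$ (i, sl K ! p i)))" .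
    show ?thesis unfolding dA sum_distrib_right by (rule sum.cong, auto simp: ac_simps)
  qed
  have "det (A * B) = (\<Sum>(K,p) \<in> ksubs n k \<times> ?P. ?g (h (K,p)))"
    using step1 step2 step3 by simp
  also have "\<dots> = (\<Sum>K \<in> ksubs n k. \<Sum>p\<in>?P. ?g (h (K,p)))"
    by (rule sum.cartesian_product[symmetric])
  also have "\<dots> = (\<Sum>K \<in> ksubs n k. det (?AK K) * det (?BK K))"
    by (rule sum.cong[OF refl], subst step5[symmetric], auto intro!: sum.cong step4)
  finally show ?thesis .
qed




definition klist :: "nat \<Rightarrow> nat \<Rightarrow> nat set list" where
  "klist d k = (SOME xs. set xs = ksubs d k \<and> distinct xs)"

lemma klist: "set (klist d k) = ksubs d k" "distinct (klist d k)"
proof -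
  have "\<exists>xs. set xs = ksubs d k \<and> distinct xs" using finite_distinct_list[OF finite_ksubs] .
  from someI_ex[OF this] show "set (klist d k) = ksubs d k" "distinct (klist d k)"
    unfolding klist_def by auto
qed

lemma klist_nth: "i < length (klist d k) \<Longrightarrow> klist d k ! i \<in> ksubs d k"
  using klist(1) nth_mem by blast

definition minor :: "nat \<Rightarrow> 'a mat \<Rightarrow> nat set \<Rightarrow> nat set \<Rightarrow> 'a :: comm_ring_1" where
  "minor k A I J = det (mat k k (\<lambda>(a,b). A $$ (sl I ! a, sl J ! b)))"

definition compound :: "nat \<Rightarrow> nat \<Rightarrow> 'a mat \<Rightarrow> 'a :: comm_ring_1 mat" where
  "compound d k A = mat (length (klist d k)) (length (klist d k))
     (\<lambda>(i,j). minor k A (klist d k ! i) (klist d k ! j))"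

lemma compound_carrier: "compound d k A \<in> carrier_mat (length (klist d k)) (length (klist d k))"
  unfolding compound_def by auto

lemma sum_nth_distinct: assumes "distinct xs" shows "(\<Sum>l = 0..<length xs. g (xs ! l)) = (\<Sum>x\<in>set xs. g x)"
proof -
  have inj: "inj_on ((!) xs) {0..<length xs}" by (rule inj_on_nth[OF assms], auto)
  have "set xs = (!) xs ` {0..<length xs}" using nth_image[of "length xs" xs] by simp
  then show ?thesis using sum.reindex[OF inj, of g] by (simp add: o_def)
qed

lemma prod_nth_distinct: assumes "distinct xs" shows "(\<Prod>l = 0..<length xs. g (xs ! l)) = (\<Prod>x\<in>set xs. g x)"
proof -
  have inj: "inj_on ((!) xs) {0..<length xs}" by (rule inj_on_nth[OF assms], auto)
  have "set xs = (!) xs ` {0..<length xs}" using nth_image[of "length xs" xs] by simp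
  then show ?thesis using prod.reindex[OF inj, of g] by (simp add: o_def)
qed

lemma minor_mult:
  fixes A B :: "'a :: comm_ring_1 mat"
  assumes A: "A \<in> carrier_mat d d" and B: "B \<in> carrier_mat d d"
    and I: "I \<in> ksubs d k" and J: "J \<in> ksubs d k"
  shows "minor k (A * B) I J = (\<Sum>K\<in>ksubs d k. minor k A I K * minor k B K J)"
proof -
  note sI = ksubs_sl[OF I] and sJ = ksubs_sl[OF J]
  have Id: "a < k \<Longrightarrow> sl I ! a < d" for a using sI by (metis atLeastLessThan_iff nth_mem subsetD)
  have Jd: "a < k \<Longrightarrow> sl J ! a < d" for a using sJ by (metis atLeastLessThan_iff nth_mem subsetD)
  let ?AI = "mat k d (\<lambda>(a,l). A $$ (sl I ! a, l))"
  let ?BJ = "mat d k (\<lambda>(l,b). B $$ (l, sl J ! b))"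
  have "mat k k (\<lambda>(a,b). (A * B) $$ (sl I ! a, sl J ! b)) = ?AI * ?BJ"
    by (rule eq_matI, insert A B Id Jd, auto simp: scalar_prod_def intro!: sum.cong)
  hence "minor k (A * B) I J = det (?AI * ?BJ)" unfolding minor_def by simp
  also have "\<dots> = (\<Sum>K \<in> ksubs d k. det (mat k k (\<lambda>(i,j). ?AI $$ (i, sl K ! j)))
            * det (mat k k (\<lambda>(i,j). ?BJ $$ (sl K ! i, j))))"
    by (rule cauchy_binet, auto)
  also have "\<dots> = (\<Sum>K\<in>ksubs d k. minor k A I K * minor k B K J)"
  proof (rule sum.cong[OF refl])
    fix K assume K: "K \<in> ksubs d k"
    note sK = ksubs_sl[OF K]
    have Kd: "a < k \<Longrightarrow> sl K ! a < d" for a using sK by (metis atLeastLessThan_iff nth_mem subsetD)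
    have 1: "mat k k (\<lambda>(i,j). ?AI $$ (i, sl K ! j)) = mat k k (\<lambda>(a,b). A $$ (sl I ! a, sl K ! b))"
      by (rule eq_matI, insert Kd, auto)
    have 2: "mat k k (\<lambda>(i,j). ?BJ $$ (sl K ! i, j)) = mat k k (\<lambda>(a,b). B $$ (sl K ! a, sl J ! b))"
      by (rule eq_matI, insert Kd, auto)
    show "det (mat k k (\<lambda>(i,j). ?AI $$ (i, sl K ! j))) * det (mat k k (\<lambda>(i,j). ?BJ $$ (sl K ! i, j)))
      = minor k A I K * minor k B K J" unfolding 1 2 minor_def ..
  qed
  finally show ?thesis .
qed

lemma compound_mult:
  fixes A B :: "'a :: comm_ring_1 mat"
  assumes A: "A \<in> carrier_mat d d" and B: "B \<in> carrier_mat d d"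
  shows "compound d k (A * B) = compound d k A * compound d k B"
proof (rule eq_matI)
  let ?L = "klist d k"
  let ?N = "length ?L"
  fix i j assume i: "i < dim_row (compound d k A * compound d k B)" and j: "j < dim_col (compound d k A * compound d k B)"
  then have i: "i < ?N" and j: "j < ?N" by (auto simp: compound_def)
  have "(compound d k A * compound d k B) $$ (i,j) = (\<Sum>l = 0..<?N. minor k A (?L ! i) (?L ! l) * minor k B (?L ! l) (?L ! j))"
    using i j by (auto simp: compound_def scalar_prod_def intro!: sum.cong)
  also have "\<dots> = (\<Sum>K\<in>ksubs d k. minor k A (?L ! i) K * minor k B K (?L ! j))"
    using sum_nth_distinct[OF klist(2), of "\<lambda>K. minor k A (?L ! i) K * minor k B K (?L ! j)"] klist(1) by simp
  also have "\<dots> = minor k (A * B) (?L ! i) (?L ! j)"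
    by (rule minor_mult[symmetric, OF A B klist_nth[OF i] klist_nth[OF j]])
  finally show "compound d k (A * B) $$ (i, j) = (compound d k A * compound d k B) $$ (i,j)"
    using i j by (simp add: compound_def)
qed (auto simp: compound_def)

definition diagm :: "nat \<Rightarrow> (nat \<Rightarrow> 'a) \<Rightarrow> 'a :: zero mat" where
  "diagm d v = mat d d (\<lambda>(i,j). if i = j then v i else 0)"

lemma minor_diag:
  fixes v :: "nat \<Rightarrow> 'a :: comm_ring_1"
  assumes I: "I \<in> ksubs d k" and J: "J \<in> ksubs d k"
  shows "minor k (diagm d v) I J = (if I = J then (\<Prod>x\<in>I. v x) else 0)"
proof -
  note sI = ksubs_sl[OF I] and sJ = ksubs_sl[OF J]
  have Id: "a < k \<Longrightarrow> sl I ! a < d" for a using sI by (metis atLeastLessThan_iff nth_mem subsetD)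
  have Jd: "a < k \<Longrightarrow> sl J ! a < d" for a using sJ by (metis atLeastLessThan_iff nth_mem subsetD)
  let ?M = "mat k k (\<lambda>(a,b). diagm d v $$ (sl I ! a, sl J ! b))"
  show ?thesis
  proof (cases "I = J")
    case True
    have ut: "upper_triangular ?M" unfolding upper_triangular_def
      using Id Jd sI True by (auto simp: diagm_def nth_eq_iff_index_eq)
    have "det ?M = prod_list (diag_mat ?M)" by (rule det_upper_triangular[OF ut], auto)
    also have "\<dots> = (\<Prod>a = 0..<k. v (sl I ! a))" unfolding prod_list_diag_prod
      using Id True by (auto simp: diagm_def intro!: prod.cong)
    also have "\<dots> = (\<Prod>x\<in>I. v x)"
      using prod_nth_distinct[OF sI(2), of v] sI(1,3) by simp
    finally show ?thesis using True unfolding minor_def by simp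
  next
    case False
    have "\<not> I \<subseteq> J"
    proof
      assume "I \<subseteq> J"
      moreover have "card I = card J" using I J unfolding ksubs_def by auto
      ultimately have "I = J" using card_subset_eq sJ(4) by blast
      with False show False by simp
    qed
    then obtain x where x: "x \<in> I" "x \<notin> J" by auto
    define a where "a = (THE j. j < length (sl I) \<and> sl I ! j = x)"
    have a: "a < k" "sl I ! a = x" using the_nth[OF sI(2), of x] sI x unfolding a_def by auto
    have "det ?M = (\<Sum>p\<in>{p. p permutes {0..<k}}. signof p * (\<Prod>i = 0..<k. ?M $$ (i, p i)))"
      by (rule det_def', auto)
    also have "\<dots> = 0"
    proof (rule sum.neutral, clarify)
      fix p assume p: "p permutes {0..<k}"
      have pa: "p a < k" using permutes_in_image[OF p] a by auto
      have "sl J ! p a \<in> J" using sJ(1,3) pa by (metis nth_mem)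
      then have "?M $$ (a, p a) = 0" using a pa Id Jd x by (auto simp: diagm_def)
      then have "(\<Prod>i = 0..<k. ?M $$ (i, p i)) = 0" using a by (intro prod_zero, auto)
      then show "signof p * (\<Prod>i = 0..<k. ?M $$ (i, p i)) = 0" by simp
    qed
    finally show ?thesis using False unfolding minor_def by simp
  qed
qed

lemma compound_diag:
  fixes v :: "nat \<Rightarrow> 'a :: comm_ring_1"
  shows "compound d k (diagm d v) = diagm (length (klist d k)) (\<lambda>i. \<Prod>x\<in>klist d k ! i. v x)"
proof (rule eq_matI)
  let ?L = "klist d k"
  fix i j assume "i < dim_row (diagm (length ?L) (\<lambda>i. \<Prod>x\<in>?L ! i. v x))"
    "j < dim_col (diagm (length ?L) (\<lambda>i. \<Prod>x\<in>?L ! i. v x))"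
  then have i: "i < length ?L" and j: "j < length ?L" by (auto simp: diagm_def)
  have "compound d k (diagm d v) $$ (i,j) = minor k (diagm d v) (?L!i) (?L!j)" using i j by (simp add: compound_def)
  also have "\<dots> = (if ?L!i = ?L!j then (\<Prod>x\<in>?L!i. v x) else 0)" by (rule minor_diag[OF klist_nth[OF i] klist_nth[OF j]])
  also have "\<dots> = diagm (length ?L) (\<lambda>i. \<Prod>x\<in>?L ! i. v x) $$ (i,j)"
    using i j klist(2) by (simp add: diagm_def nth_eq_iff_index_eq)
  finally show "compound d k (diagm d v) $$ (i,j) = diagm (length ?L) (\<lambda>i. \<Prod>x\<in>?L ! i. v x) $$ (i,j)" .
qed (auto simp: compound_def diagm_def)

lemma compound_one: "compound d k (1\<^sub>m d :: 'a :: comm_ring_1 mat) = 1\<^sub>m (length (klist d k))"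
proof -
  have "1\<^sub>m d = diagm d (\<lambda>_. 1 :: 'a)" by (rule eq_matI, auto simp: diagm_def)
  then show ?thesis using compound_diag[of d k "\<lambda>_. 1 :: 'a"] by (auto simp: diagm_def intro: eq_matI)
qed




definition Cm :: "int poly \<Rightarrow> nat \<Rightarrow> complex mat" where
  "Cm p d = mat d d (\<lambda>(i,j). if Suc i < d then (if j = Suc i then 1 else 0)
      else - of_int (coeff p j) / of_int (lead_coeff p))"

definition Cint :: "int poly \<Rightarrow> nat \<Rightarrow> int mat" where
  "Cint p d = mat d d (\<lambda>(i,j). if Suc i < d then (if j = Suc i then 1 else 0) else - coeff p j)"

definition Vand :: "complex list \<Rightarrow> complex mat" where
  "Vand as = mat (length as) (length as) (\<lambda>(i,j). (as ! j) ^ i)"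

lemma poly_of_int_sum: "poly (map_poly (of_int :: int \<Rightarrow> complex) p) x = (\<Sum>l\<le>degree p. of_int (coeff p l) * x ^ l)"
  by (simp add: poly_altdef)

lemma CV:
  assumes deg: "degree p = length as" and roots: "\<forall>x\<in>set as. poly (map_poly of_int p) x = 0"
  shows "Cm p (length as) * Vand as = Vand as * diagm (length as) (\<lambda>i. as ! i)"
proof (rule eq_matI)
  let ?d = "length as"
  fix i j assume "i < dim_row (Vand as * diagm ?d (\<lambda>i. as ! i))" "j < dim_col (Vand as * diagm ?d (\<lambda>i. as ! i))"
  then have i: "i < ?d" and j: "j < ?d" by (auto simp: Vand_def diagm_def)
  let ?x = "as ! j"
  have rhs: "(Vand as * diagm ?d (\<lambda>i. as ! i)) $$ (i,j) = ?x ^ Suc i"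
  proof -
    have "(Vand as * diagm ?d (\<lambda>i. as ! i)) $$ (i,j) = (\<Sum>l = 0..<?d. (as ! l) ^ i * (if l = j then as ! l else 0))"
      using i j by (simp add: Vand_def diagm_def scalar_prod_def)
    also have "\<dots> = (\<Sum>l = 0..<?d. (if l = j then ?x ^ Suc i else 0))"
      by (rule sum.cong, auto)
    also have "\<dots> = ?x ^ Suc i" using j by simp
    finally show ?thesis .
  qed
  have lhs0: "(Cm p ?d * Vand as) $$ (i,j) = (\<Sum>l = 0..<?d. Cm p ?d $$ (i,l) * ?x ^ l)"
    using i j by (simp add: Vand_def Cm_def scalar_prod_def)
  show "(Cm p ?d * Vand as) $$ (i,j) = (Vand as * diagm ?d (\<lambda>i. as ! i)) $$ (i,j)"
  proof (cases "Suc i < ?d")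
    case True
    have "(\<Sum>l = 0..<?d. Cm p ?d $$ (i,l) * ?x ^ l) = (\<Sum>l = 0..<?d. (if l = Suc i then ?x ^ Suc i else 0))"
      by (rule sum.cong, insert True i, auto simp: Cm_def)
    also have "\<dots> = ?x ^ Suc i" using True by simp
    finally show ?thesis using lhs0 rhs by simp
  next
    case False
    with i have id: "Suc i = ?d" by simp
    have "p \<noteq> 0" using deg i by auto
    then have a0: "lead_coeff p \<noteq> 0" by simp
    have "?x \<in> set as" using j by auto
    with roots have "poly (map_poly of_int p) ?x = 0" by auto
    hence "(\<Sum>l\<le>?d. of_int (coeff p l) * ?x ^ l) = 0" unfolding poly_of_int_sum deg .
    hence s: "(\<Sum>l = 0..<?d. of_int (coeff p l) * ?x ^ l) = - of_int (lead_coeff p) * ?x ^ ?d"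
      using deg by (simp add: atMost_atLeast0 atLeastLessThanSuc_atLeastAtMost[symmetric]) (simp add: add_eq_0_iff)
    have "(\<Sum>l = 0..<?d. Cm p ?d $$ (i,l) * ?x ^ l) = (\<Sum>l = 0..<?d. - (of_int (coeff p l) * ?x ^ l) / of_int (lead_coeff p))"
      by (rule sum.cong, insert False i, auto simp: Cm_def)
    also have "\<dots> = - (\<Sum>l = 0..<?d. of_int (coeff p l) * ?x ^ l) / of_int (lead_coeff p)"
      by (simp add: sum_divide_distrib sum_negf)
    also have "\<dots> = ?x ^ ?d" unfolding s using a0 by simp
    finally show ?thesis using lhs0 rhs id by simp
  qed
qed (auto simp: Vand_def Cm_def diagm_def)

lemma det_Vand: assumes "distinct as" shows "det (Vand as) \<noteq> 0"
proof
  let ?n = "length as"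
  let ?V = "Vand as"
  have V: "?V \<in> carrier_mat ?n ?n" by (simp add: Vand_def)
  assume "det ?V = 0"
  then have "det (transpose_mat ?V) = 0" using det_transpose[OF V] by simp
  then obtain v where v: "v \<in> carrier_vec ?n" "v \<noteq> 0\<^sub>v ?n" "transpose_mat ?V *\<^sub>v v = 0\<^sub>v ?n"
    using det_0_iff_vec_prod_zero_field[of "transpose_mat ?V" ?n] V by auto
  define P where "P = (\<Sum>i<?n. monom (v $ i) i)"
  have coeffP: "coeff P i = (if i < ?n then v $ i else 0)" for i
    unfolding P_def by (auto simp: coeff_sum coeff_monom)
  have polyP: "poly P x = (\<Sum>i<?n. v $ i * x ^ i)" for x
    unfolding P_def by (simp add: poly_sum poly_monom)
  have root: "poly P (as ! j) = 0" if j: "j < ?n" for j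
  proof -
    have "(transpose_mat ?V *\<^sub>v v) $ j = 0" using v(3) j by simp
    moreover have "(transpose_mat ?V *\<^sub>v v) $ j = (\<Sum>i = 0..<?n. (as ! j) ^ i * v $ i)"
      using j v(1) by (simp add: Vand_def scalar_prod_def)
    ultimately show ?thesis unfolding polyP by (simp add: lessThan_atLeast0 ac_simps)
  qed
  have "P = 0"
  proof (rule ccontr)
    assume P0: "P \<noteq> 0"
    have n0: "?n > 0"
    proof (rule ccontr)
      assume "\<not> ?n > 0"
      then have "\<forall>i. coeff P i = 0" using coeffP by auto
      hence "P = 0" by (simp add: poly_eq_iff)
      with P0 show False by simp
    qed
    have "degree P \<le> ?n - 1" by (rule degree_le, auto simp: coeffP)
    moreover have "set as \<subseteq> {x. poly P x = 0}" using root by (auto simp: in_set_conv_nth)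
    then have "card (set as) \<le> card {x. poly P x = 0}"
      by (rule card_mono[OF poly_roots_finite[OF P0]])
    then have "?n \<le> degree P" using card_poly_roots_bound[OF P0] assms distinct_card by fastforce
    ultimately show False using n0 by linarith
  qed
  then have "v = 0\<^sub>v ?n" using coeffP v(1) by (intro eq_vecI, auto) (metis coeff_0)
  with v(2) show False by simp
qed

lemma Vand_inv: assumes "distinct as"
  obtains W where "W \<in> carrier_mat (length as) (length as)" "Vand as * W = 1\<^sub>m (length as)" "W * Vand as = 1\<^sub>m (length as)"
proof -
  have V: "Vand as \<in> carrier_mat (length as) (length as)" by (simp add: Vand_def)
  from det_non_zero_imp_unit[OF V det_Vand[OF assms], of "()"]
  show ?thesis using that unfolding Units_def ring_mat_def by auto
qed




lemma minor_Cm_int: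
  assumes I: "I \<in> ksubs d k" and J: "J \<in> ksubs d k" and a0: "lead_coeff p \<noteq> 0"
  shows "of_int (lead_coeff p) * minor k (Cm p d) I J =
     of_int (if d - 1 \<in> I then minor k (Cint p d) I J else lead_coeff p * minor k (Cint p d) I J)"
proof -
  note sI = ksubs_sl[OF I] and sJ = ksubs_sl[OF J]
  have Id: "a < k \<Longrightarrow> sl I ! a < d" for a using sI by (metis atLeastLessThan_iff nth_mem subsetD)
  have Jd: "a < k \<Longrightarrow> sl J ! a < d" for a using sJ by (metis atLeastLessThan_iff nth_mem subsetD)
  have IinI: "a < k \<Longrightarrow> sl I ! a \<in> I" for a using sI by (metis nth_mem)
  let ?M = "mat k k (\<lambda>(a,b). Cm p d $$ (sl I ! a, sl J ! b))"
  let ?Mi = "mat k k (\<lambda>(a,b). Cint p d $$ (sl I ! a, sl J ! b))"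
  have M: "?M \<in> carrier_mat k k" by simp
  have mi: "minor k (Cint p d) I J = det ?Mi" unfolding minor_def ..
  have m: "minor k (Cm p d) I J = det ?M" unfolding minor_def ..
  show ?thesis
  proof (cases "d - 1 \<in> I")
    case False
    have "?M = map_mat of_int ?Mi"
    proof (rule eq_matI)
      fix a b assume "a < dim_row (map_mat (of_int :: int \<Rightarrow> complex) ?Mi)" "b < dim_col (map_mat (of_int :: int \<Rightarrow> complex) ?Mi)"
      then have a: "a < k" and b: "b < k" by auto
      have "sl I ! a \<noteq> d - 1" using IinI[OF a] False by metis
      then have "Suc (sl I ! a) < d" using Id[OF a] by linarith
      then show "?M $$ (a,b) = map_mat of_int ?Mi $$ (a,b)"
        using a b Id[OF a] Jd[OF b] by (simp add: Cm_def Cint_def)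
    qed auto
    then have "minor k (Cm p d) I J = of_int (minor k (Cint p d) I J)"
      unfolding m mi by (simp add: of_int_hom.hom_det)
    then show ?thesis using False by simp
  next
    case True
    define a' where "a' = (THE j. j < length (sl I) \<and> sl I ! j = d - 1)"
    have a': "a' < k" "sl I ! a' = d - 1" using the_nth[OF sI(2), of "d - 1"] sI True unfolding a'_def by auto
    have dpos: "d > 0" using True sI(5) by auto
    have "multrow a' (of_int (lead_coeff p)) ?M = map_mat of_int ?Mi"
    proof (rule eq_matI)
      fix a b assume "a < dim_row (map_mat (of_int :: int \<Rightarrow> complex) ?Mi)" "b < dim_col (map_mat (of_int :: int \<Rightarrow> complex) ?Mi)"
      then have a: "a < k" and b: "b < k" by auto
      show "multrow a' (of_int (lead_coeff p)) ?M $$ (a,b) = map_mat of_int ?Mi $$ (a,b)"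
      proof (cases "a = a'")
        case True
        then show ?thesis using a b a' dpos Id[OF a] Jd[OF b] a0 by (simp add: Cm_def Cint_def)
      next
        case False
        then have "sl I ! a \<noteq> d - 1" using a' a sI(1,2) nth_eq_iff_index_eq by metis
        then have "Suc (sl I ! a) < d" using Id[OF a] by linarith
        then show ?thesis using False a b Id[OF a] Jd[OF b] by (simp add: Cm_def Cint_def)
      qed
    qed auto
    then have "of_int (lead_coeff p) * det ?M = det (map_mat of_int ?Mi)"
      using det_multrow[OF a'(1) M, of "of_int (lead_coeff p)"] by simp
    then show ?thesis using True unfolding m mi by (simp add: of_int_hom.hom_det)
  qed
qed

definition Bint :: "int poly \<Rightarrow> nat \<Rightarrow> nat \<Rightarrow> int \<Rightarrow> int mat" where
  "Bint p d k s = mat (length (klist d k)) (length (klist d k)) (\<lambda>(i,j). s *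
     (if d - 1 \<in> klist d k ! i then minor k (Cint p d) (klist d k ! i) (klist d k ! j)
      else lead_coeff p * minor k (Cint p d) (klist d k ! i) (klist d k ! j)))"

lemma Bint_carrier: "Bint p d k s \<in> carrier_mat (length (klist d k)) (length (klist d k))"
  unfolding Bint_def by simp

lemma Bint_map: assumes a0: "lead_coeff p \<noteq> 0"
  shows "map_mat of_int (Bint p d k s) = (of_int (s * lead_coeff p) :: complex) \<cdot>\<^sub>m compound d k (Cm p d)"
proof (rule eq_matI)
  fix i j assume "i < dim_row ((of_int (s * lead_coeff p) :: complex) \<cdot>\<^sub>m compound d k (Cm p d))"
     "j < dim_col ((of_int (s * lead_coeff p) :: complex) \<cdot>\<^sub>m compound d k (Cm p d))"
  then have i: "i < length (klist d k)" and j: "j < length (klist d k)" by (auto simp: compound_def)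
  from minor_Cm_int[OF klist_nth[OF i] klist_nth[OF j] a0]
  show "map_mat of_int (Bint p d k s) $$ (i, j) = ((of_int (s * lead_coeff p) :: complex) \<cdot>\<^sub>m compound d k (Cm p d)) $$ (i, j)"
    using i j unfolding Bint_def compound_def by (simp add: ac_simps)
qed (auto simp: Bint_def compound_def)

lemma compound_charpoly:
  assumes deg: "degree p = length as" and d0: "length as > 0" and dist: "distinct as"
    and roots: "\<forall>x\<in>set as. poly (map_poly of_int p) x = 0"
  shows "lead_coeff (char_poly (Bint p (length as) k s)) = 1"
    "poly (map_poly of_int (char_poly (Bint p (length as) k s))) z = (0::complex) \<longleftrightarrow>
      (\<exists>K\<in>ksubs (length as) k. z = of_int (s * lead_coeff p) * (\<Prod>x\<in>K. as ! x))"
proof -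
  let ?d = "length as"
  let ?N = "length (klist ?d k)"
  let ?B = "Bint p ?d k s"
  have B: "?B \<in> carrier_mat ?N ?N" by (rule Bint_carrier)
  from degree_monic_char_poly[OF B] show "lead_coeff (char_poly ?B) = 1" by simp
  have p0: "p \<noteq> 0" using deg d0 by auto
  hence a0: "lead_coeff p \<noteq> 0" by simp
  let ?V = "Vand as"
  let ?D = "diagm ?d (\<lambda>i. as ! i)"
  let ?C = "Cm p ?d"
  obtain W where W: "W \<in> carrier_mat ?d ?d" "?V * W = 1\<^sub>m ?d" "W * ?V = 1\<^sub>m ?d" using Vand_inv[OF dist] by blast
  have V: "?V \<in> carrier_mat ?d ?d" by (simp add: Vand_def)
  have Dc: "?D \<in> carrier_mat ?d ?d" by (simp add: diagm_def)
  have Cc: "?C \<in> carrier_mat ?d ?d" by (simp add: Cm_def)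
  have "?C = ?C * (?V * W)" using W Cc by simp
  also have "\<dots> = (?C * ?V) * W" using W Cc V by simp
  also have "\<dots> = ?V * ?D * W" unfolding CV[OF deg roots] ..
  finally have CVDW: "?C = ?V * ?D * W" .
  let ?cV = "compound ?d k ?V" let ?cW = "compound ?d k W" let ?cD = "compound ?d k ?D"
  have cC: "compound ?d k ?C = ?cV * ?cD * ?cW"
    unfolding CVDW by (simp add: compound_mult[OF mult_carrier_mat[OF V Dc] W(1)] compound_mult[OF V Dc])
  have cVW: "?cV * ?cW = 1\<^sub>m ?N" by (metis compound_mult[OF V W(1), of k] W(2) compound_one)
  have cWV: "?cW * ?cV = 1\<^sub>m ?N" by (metis compound_mult[OF W(1) V, of k] W(3) compound_one)
  have cV: "?cV \<in> carrier_mat ?N ?N" and cW: "?cW \<in> carrier_mat ?N ?N" and cD: "?cD \<in> carrier_mat ?N ?N"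
    by (rule compound_carrier)+
  define c where "c = (of_int (s * lead_coeff p) :: complex)"
  have "?cV * (c \<cdot>\<^sub>m ?cD) * ?cW = c \<cdot>\<^sub>m (?cV * ?cD * ?cW)"
    by (simp only: mult_smult_distrib[OF cV cD] mult_smult_assoc_mat[OF mult_carrier_mat[OF cV cD] cW])
  hence eq: "c \<cdot>\<^sub>m compound ?d k ?C = ?cV * (c \<cdot>\<^sub>m ?cD) * ?cW" unfolding cC by simp
  have cCc: "c \<cdot>\<^sub>m compound ?d k ?C \<in> carrier_mat ?N ?N" by (rule smult_carrier_mat[OF compound_carrier])
  have cDc: "c \<cdot>\<^sub>m ?cD \<in> carrier_mat ?N ?N" by (rule smult_carrier_mat[OF compound_carrier])
  have "similar_mat_wit (c \<cdot>\<^sub>m compound ?d k ?C) (c \<cdot>\<^sub>m ?cD) ?cV ?cW"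
    unfolding similar_mat_wit_def Let_def using cCc cDc cV cW cVW cWV eq by auto
  hence sim: "similar_mat (c \<cdot>\<^sub>m compound ?d k ?C) (c \<cdot>\<^sub>m ?cD)"
    unfolding similar_mat_def by blast
  have cDd: "c \<cdot>\<^sub>m ?cD = diagm ?N (\<lambda>i. c * (\<Prod>x\<in>klist ?d k ! i. as ! x))"
    unfolding compound_diag by (rule eq_matI, auto simp: diagm_def)
  have ut: "upper_triangular (diagm ?N (\<lambda>i. c * (\<Prod>x\<in>klist ?d k ! i. as ! x)))"
    unfolding upper_triangular_def diagm_def by auto
  have "map_poly of_int (char_poly ?B) = char_poly (map_mat (of_int :: int \<Rightarrow> complex) ?B)"
    by (rule of_int_hom.char_poly_hom[OF B, symmetric])
  also have "map_mat (of_int :: int \<Rightarrow> complex) ?B = c \<cdot>\<^sub>m compound ?d k ?C" unfolding c_def by (rule Bint_map[OF a0])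
  also have "char_poly (c \<cdot>\<^sub>m compound ?d k ?C) = char_poly (c \<cdot>\<^sub>m ?cD)" by (rule char_poly_similar[OF sim])
  also have "c \<cdot>\<^sub>m ?cD = diagm ?N (\<lambda>i. c * (\<Prod>x\<in>klist ?d k ! i. as ! x))" by (rule cDd)
  also have "char_poly (diagm ?N (\<lambda>i. c * (\<Prod>x\<in>klist ?d k ! i. as ! x))) = (\<Prod>a\<leftarrow>diag_mat (diagm ?N (\<lambda>i. c * (\<Prod>x\<in>klist ?d k ! i. as ! x))). [:- a, 1:])"
    by (rule char_poly_upper_triangular[of _ ?N, OF _ ut], simp add: diagm_def)
  also have "diag_mat (diagm ?N (\<lambda>i. c * (\<Prod>x\<in>klist ?d k ! i. as ! x))) = map (\<lambda>i. c * (\<Prod>x\<in>klist ?d k ! i. as ! x)) [0..<?N]"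
    by (simp add: diag_mat_def diagm_def)
  finally have cp2: "map_poly of_int (char_poly ?B) = (\<Prod>i\<leftarrow>[0..<?N]. [:- (c * (\<Prod>x\<in>klist ?d k ! i. as ! x)), 1:])"
    by (simp add: o_def)
  have "poly (map_poly of_int (char_poly ?B)) z = 0 \<longleftrightarrow> (\<exists>i<?N. z = c * (\<Prod>x\<in>klist ?d k ! i. as ! x))"
    unfolding cp2 by (simp add: poly_prod_list prod_list_zero_iff o_def image_iff eq_commute[of 0] right_minus_eq) (metis atLeastLessThan_iff zero_le)
  also have "\<dots> \<longleftrightarrow> (\<exists>K\<in>ksubs ?d k. z = c * (\<Prod>x\<in>K. as ! x))"
    using klist(1)[of ?d k] by (metis in_set_conv_nth)
  finally show "poly (map_poly of_int (char_poly ?B)) z = 0 \<longleftrightarrow> (\<exists>K\<in>ksubs ?d k. z = of_int (s * lead_coeff p) * (\<Prod>x\<in>K. as ! x))"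
    unfolding c_def .
qed




lemma alg_ipoly: assumes "algebraic (x::complex)"
  obtains q :: "int poly" where "q \<noteq> 0" "poly (map_poly of_int q) x = 0"
proof -
  from algebraicE[OF assms] obtain p where p: "\<And>i. coeff p i \<in> \<int>" "p \<noteq> 0" "poly p x = 0" by blast
  define the_int where "the_int = (\<lambda>x::complex. THE r. x = of_int r)"
  define q where "q = map_poly the_int p"
  have of_int_the_int: "of_int (the_int y) = y" if "y \<in> \<int>" for y
    unfolding the_int_def by (rule sym, rule theI') (insert that, auto simp: Ints_def)
  have [simp]: "the_int 0 = 0" using of_int_the_int[of 0] by simp
  have "map_poly of_int q = map_poly (of_int \<circ> the_int) p" by (simp add: q_def map_poly_map_poly)
  also have "\<dots> = p" using p(1) of_int_the_int by (subst poly_eq_iff) (auto simp: coeff_map_poly)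
  finally have qp: "map_poly of_int q = p" .
  then have "q \<noteq> 0" using p(2) by auto
  with qp p(3) show thesis using that by auto
qed

lemma ipoly_prod_mset: "poly (map_poly (of_int :: int \<Rightarrow> complex) (prod_mset M)) x = prod_mset (image_mset (\<lambda>f. poly (map_poly of_int f) x) M)"
  by (induction M) (simp_all add: of_int_poly_hom.hom_mult)

lemma normalize_pos: assumes "lead_coeff (f :: int poly) > 0" shows "normalize f = f"
proof -
  have "unit_factor f = 1" using assms by (simp add: unit_factor_poly_def)
  then show ?thesis using unit_factor_mult_normalize[of f] by simp
qed

lemma ipoly_uf: "poly (map_poly (of_int :: int \<Rightarrow> complex) q) x = poly (map_poly of_int (unit_factor q)) x * poly (map_poly of_int (normalize q)) x"
proof -
  have "map_poly (of_int :: int \<Rightarrow> complex) q = map_poly of_int (unit_factor q) * map_poly of_int (normalize q)"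
    by (metis of_int_poly_hom.hom_mult unit_factor_mult_normalize)
  then show ?thesis by (metis poly_mult)
qed

lemma exists_min: assumes q0: "q \<noteq> 0" and qx: "poly (map_poly of_int q) (x::complex) = 0"
  shows "\<exists>f. irreducible f \<and> lead_coeff f > 0 \<and> poly (map_poly of_int f) x = 0"
proof -
  have "unit_factor (lead_coeff q) \<noteq> 0" using q0 by (simp add: sgn_0_0)
  then have "poly (map_poly (of_int :: int \<Rightarrow> complex) (unit_factor q)) x \<noteq> 0" by (simp add: unit_factor_poly_def)
  with qx ipoly_uf[of q x] have nq: "poly (map_poly (of_int :: int \<Rightarrow> complex) (normalize q)) x = 0" by simp
  obtain A where A: "\<And>y. y \<in># A \<Longrightarrow> prime y" "normalize (prod_mset A) = normalize q"
    using prime_factorization_exists'[OF q0] by blast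
  have "poly (map_poly (of_int :: int \<Rightarrow> complex) (prod_mset A)) x = 0"
    using ipoly_uf[of "prod_mset A" x] nq A(2) by simp
  then obtain f where f: "f \<in># A" "poly (map_poly of_int f) x = 0"
    unfolding ipoly_prod_mset by (auto simp: prod_mset_zero_iff)
  then have pf: "prime f" using A(1) by auto
  then have irr: "irreducible f" by (auto simp: prime_def prime_elem_iff_irreducible)
  from pf have nf: "normalize f = f" by simp
  have f0: "f \<noteq> 0" using pf by auto
  have "unit_factor f * f = f" using unit_factor_mult_normalize[of f] nf by simp
  then have "unit_factor f = 1" using f0 by (metis mult_cancel_right2)
  then have "sgn (lead_coeff f) = 1" by (simp add: unit_factor_poly_def)
  then have "lead_coeff f > 0" by (simp add: sgn_1_pos)
  with irr f(2) show ?thesis by blast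
qed

lemma of_rat_of_int_poly: "map_poly (of_rat :: rat \<Rightarrow> complex) (map_poly of_int p) = map_poly of_int p"
  by (simp add: map_poly_map_poly o_def)

lemma rat_irr_dvd:
  fixes P Q :: "rat poly" and x :: complex
  assumes irrP: "irreducible\<^sub>d P" and Px: "poly (map_poly of_rat P) x = 0" and Qx: "poly (map_poly of_rat Q) x = 0"
  shows "P dvd Q"
proof -
  have P0: "P \<noteq> 0" using irreducible\<^sub>dD(1)[OF irrP] by auto
  interpret mp: map_poly_comm_ring_hom "of_rat :: rat \<Rightarrow> complex"
    by (unfold_locales; simp add: of_rat_add of_rat_mult)
  let ?g = "gcd P Q"
  have gx: "poly (map_poly (of_rat :: rat \<Rightarrow> complex) ?g) x = 0"
  proof -
    have "?g = fst (bezout_coefficients P Q) * P + snd (bezout_coefficients P Q) * Q"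
      by (rule bezout_coefficients_fst_snd[symmetric])
    then have "map_poly (of_rat :: rat \<Rightarrow> complex) ?g = map_poly of_rat (fst (bezout_coefficients P Q)) * map_poly of_rat P
       + map_poly of_rat (snd (bezout_coefficients P Q)) * map_poly of_rat Q"
      by (simp add: mp.hom_add mp.hom_mult)
    then show ?thesis using Px Qx by simp
  qed
  have gP: "?g dvd P" by simp
  then obtain h where Pgh: "P = ?g * h" by (elim dvdE)
  have g0: "?g \<noteq> 0" using P0 by simp
  have h0: "h \<noteq> 0" using P0 Pgh by auto
  have dg: "degree ?g \<noteq> 0"
  proof
    assume "degree ?g = 0"
    then obtain c where gc: "?g = [:c:]" by (metis degree_eq_zeroE)
    with g0 have "c \<noteq> 0" by auto
    with gx gc show False by simp
  qed
  have dh: "degree h = 0"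
  proof (rule ccontr)
    assume "degree h \<noteq> 0"
    moreover have "degree P = degree ?g + degree h"
    proof -
      have "degree (?g * h) = degree ?g + degree h" by (rule degree_mult_eq[OF g0 h0])
      thus ?thesis using Pgh by metis
    qed
    ultimately have d1: "degree ?g < degree P" and d2: "degree h < degree P" using dg by auto
    from irreducible\<^sub>dD(2)[OF irrP d1 d2] Pgh show False by simp
  qed
  then obtain e where he: "h = [:e:]" by (metis degree_eq_zeroE)
  with h0 have e0: "e \<noteq> 0" by auto
  have Pe: "P = Polynomial.smult e ?g" using Pgh he by simp
  have "Polynomial.smult (inverse e) P = Polynomial.smult (inverse e) (Polynomial.smult e ?g)" using Pe by (rule arg_cong)
  also have "\<dots> = ?g" using e0 by simp
  finally have "Polynomial.smult (inverse e) P = ?g" .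
  then have "P dvd ?g" using dvd_smult[of P P "inverse e"] by simp
  then show "P dvd Q" using gcd_dvd2 dvd_trans by blast
qed

lemma irr_basic:
  fixes p :: "int poly" and x :: complex
  assumes irr: "irreducible p" and px: "poly (map_poly of_int p) x = 0"
  shows "degree p \<noteq> 0" "content p = 1" "irreducible\<^sub>d (map_poly rat_of_int p)"
proof -
  have p0: "p \<noteq> 0" using irr by auto
  show deg: "degree p \<noteq> 0"
  proof
    assume "degree p = 0"
    then obtain c where "p = [:c:]" by (metis degree_eq_zeroE)
    with px p0 show False by simp
  qed
  have prim: "primitive p" by (rule irreducible_imp_primitive[OF irr deg])
  then show "content p = 1" by simp
  have irrd: "irreducible\<^sub>d p" using irreducible_primitive_connect[OF prim] irr by simp
  show "irreducible\<^sub>d (map_poly rat_of_int p)" by (rule irreducible\<^sub>d_int_rat[OF irrd])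
qed

lemma irr_dvd:
  fixes p q :: "int poly" and x :: complex
  assumes irr: "irreducible p" and px: "poly (map_poly of_int p) x = 0" and qx: "poly (map_poly of_int q) x = 0"
  shows "p dvd q"
proof -
  note b = irr_basic[OF irr px]
  have "map_poly rat_of_int p dvd map_poly rat_of_int q"
    by (rule rat_irr_dvd[OF b(3), of x], insert px qx, auto simp: of_rat_of_int_poly)
  then show ?thesis using dvd_poly_int_content_1[OF b(2)] by simp
qed

lemma irr_rsquarefree:
  fixes p :: "int poly" and x :: complex
  assumes irr: "irreducible p" and px: "poly (map_poly of_int p) x = 0"
  shows "rsquarefree (map_poly (of_int :: int \<Rightarrow> complex) p)"
proof -
  note b = irr_basic[OF irr px]
  let ?P = "map_poly rat_of_int p"
  have id: "map_poly (of_int :: int \<Rightarrow> complex) p = map_poly of_rat ?P" by (simp add: of_rat_of_int_poly)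
  show ?thesis unfolding rsquarefree_roots
  proof (intro allI notI)
    fix a assume "poly (map_poly (of_int :: int \<Rightarrow> complex) p) a = 0 \<and> poly (pderiv (map_poly of_int p)) a = 0"
    then have a1: "poly (map_poly of_rat ?P) a = 0" and a2: "poly (map_poly (of_rat :: rat \<Rightarrow> complex) (pderiv ?P)) a = 0"
      unfolding id by (auto simp: of_rat_hom.map_poly_pderiv)
    have "?P dvd pderiv ?P" by (rule rat_irr_dvd[OF b(3) a1 a2])
    moreover have "pderiv ?P \<noteq> 0" using b(1) by (simp add: pderiv_eq_0_iff)
    ultimately have "degree ?P \<le> degree (pderiv ?P)" by (rule dvd_imp_degree_le)
    with b(1) show False by (simp add: degree_pderiv)
  qed
qed

lemma min_int_poly_spec: assumes "q \<noteq> 0" "poly (map_poly of_int q) (x::complex) = 0"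
  shows "irreducible (min_int_poly x) \<and> lead_coeff (min_int_poly x) > 0 \<and> poly (map_poly of_int (min_int_poly x)) x = 0"
proof -
  from exists_min[OF assms] obtain f where f: "irreducible f" "lead_coeff f > 0" "poly (map_poly of_int f) x = 0" by blast
  have uniq: "g = f" if g: "irreducible g \<and> lead_coeff g > 0 \<and> poly (map_poly of_int g) x = 0" for g
  proof -
    have "g dvd f" using irr_dvd g f by blast
    moreover have "f dvd g" using irr_dvd g f by blast
    ultimately show ?thesis using associated_eqI normalize_pos[of g] normalize_pos[OF f(2)] g by blast
  qed
  have "min_int_poly x = f" unfolding min_int_poly_def
  proof (rule the_equality)
    show "irreducible f \<and> lead_coeff f > 0 \<and> poly (map_poly of_int f) x = 0" using f by blast
  next
    fix g assume "irreducible g \<and> lead_coeff g > 0 \<and> poly (map_poly of_int g) x = 0"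
    then show "g = f" by (rule uniq)
  qed
  with f show ?thesis by simp
qed





lemma minpoly_facts:
  assumes q0: "q \<noteq> 0" and qx: "poly (map_poly of_int q) (x::complex) = 0"
  fixes P assumes P_def: "P = min_int_poly x"
  defines "R \<equiv> {z. poly (map_poly (of_int :: int \<Rightarrow> complex) P) z = 0}"
  shows "irreducible P" "lead_coeff P > 0" "x \<in> R" "degree P > 0" "finite R" "card R = degree P"
    "map_poly of_int P = Polynomial.smult (of_int (lead_coeff P)) (\<Prod>z\<in>R. [:-z,1:])"
proof -
  note spec = min_int_poly_spec[OF q0 qx, folded P_def]
  show irr: "irreducible P" and "lead_coeff P > 0" using spec by auto
  have Px: "poly (map_poly of_int P) x = 0" using spec by auto
  then show "x \<in> R" unfolding R_def by simp
  show "degree P > 0" using irr_basic(1)[OF irr Px] by simp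
  have P0: "map_poly (of_int :: int \<Rightarrow> complex) P \<noteq> 0" using irr by auto
  show fR: "finite R" unfolding R_def by (rule poly_roots_finite[OF P0])
  have rs: "rsquarefree (map_poly (of_int :: int \<Rightarrow> complex) P)" by (rule irr_rsquarefree[OF irr Px])
  from complex_poly_decompose_rsquarefree[OF rs]
  have dec: "Polynomial.smult (of_int (lead_coeff P)) (\<Prod>z\<in>R. [:-z,1:]) = map_poly of_int P" unfolding R_def by simp
  then show "map_poly of_int P = Polynomial.smult (of_int (lead_coeff P)) (\<Prod>z\<in>R. [:-z,1:])" by simp
  have "degree (map_poly (of_int :: int \<Rightarrow> complex) P) = degree (\<Prod>z\<in>R. [:-z,1:])"
    unfolding dec[symmetric] using irr spec by auto
  also have "\<dots> = card R" by (subst degree_prod_sum_eq, auto)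
  finally show "card R = degree P" by simp
qed

lemma height_monic:
  assumes Qm: "lead_coeff Q = 1" and Qx: "poly (map_poly of_int Q) (x::complex) = 0"
  fixes P assumes P_def: "P = min_int_poly x"
  defines "R \<equiv> {z. poly (map_poly (of_int :: int \<Rightarrow> complex) P) z = 0}"
  shows "lead_coeff P = 1" "R \<subseteq> {z. poly (map_poly of_int Q) z = 0}"
    "weil_height x = root (card R) (\<Prod>z\<in>R. max 1 (cmod z))" "card R > 0" "finite R"
    "map_poly of_int P = (\<Prod>z\<in>R. [:-z,1:])"
proof -
  have Q0: "Q \<noteq> 0" using Qm by auto
  note F = minpoly_facts[OF Q0 Qx P_def, folded R_def]
  have Px: "poly (map_poly of_int P) x = 0" using F(3) unfolding R_def by simp
  have "P dvd Q" by (rule irr_dvd[OF F(1) Px Qx])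
  then obtain h where Qh: "Q = P * h" by (elim dvdE)
  have "lead_coeff P * lead_coeff h = 1" using Qm Qh by (simp add: lead_coeff_mult)
  then show lP: "lead_coeff P = 1" using F(2) pos_zmult_eq_1_iff by blast
  show "R \<subseteq> {z. poly (map_poly of_int Q) z = 0}"
    unfolding R_def Qh by (auto simp: of_int_poly_hom.hom_mult)
  show "weil_height x = root (card R) (\<Prod>z\<in>R. max 1 (cmod z))"
    unfolding weil_height_def Let_def P_def[symmetric] R_def[symmetric] using lP F(6) by simp
  show "card R > 0" using F(4,6) by simp
  show "finite R" by (rule F(5))
  show "map_poly of_int P = (\<Prod>z\<in>R. [:-z,1:])" using F(7) lP by simp
qed

lemma height_le:
  assumes b1: "\<beta> \<ge> 1" and Qm: "lead_coeff Q = 1" and Qx: "poly (map_poly of_int Q) (complex_of_real \<beta>) = 0"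
    and bnd: "\<And>z. poly (map_poly of_int Q) z = 0 \<Longrightarrow> cmod z \<le> \<beta>"
  shows "weil_height (complex_of_real \<beta>) \<le> \<beta>"
    "weil_height (complex_of_real \<beta>) = \<beta> \<Longrightarrow> (\<exists>a::nat. \<exists>b::rat. b > 0 \<and> \<beta> = real a powr real_of_rat b)"
proof -
  define P where "P = min_int_poly (complex_of_real \<beta>)"
  define R where "R = {z. poly (map_poly (of_int :: int \<Rightarrow> complex) P) z = 0}"
  note H = height_monic[OF Qm Qx P_def, folded R_def]
  define e where "e = card R"
  define X where "X = (\<Prod>z\<in>R. max 1 (cmod z))"
  have e0: "e > 0" using H(4) e_def by simp
  have wX: "weil_height (complex_of_real \<beta>) = root e X" using H(3) e_def X_def by simp
  have zb: "cmod z \<le> \<beta>" if "z \<in> R" for z using H(2) that bnd by auto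
  have fb: "max 1 (cmod z) \<le> \<beta>" if "z \<in> R" for z using zb[OF that] b1 by simp
  have X0: "X \<ge> 0" unfolding X_def by (rule prod_nonneg, auto)
  have Xle: "X \<le> \<beta> ^ e" unfolding X_def e_def
    using prod_mono[of R "\<lambda>z. max 1 (cmod z)" "\<lambda>_. \<beta>"] fb by auto
  have "root e X \<le> root e (\<beta> ^ e)" using Xle e0 by (simp add: real_root_le_iff)
  also have "root e (\<beta> ^ e) = \<beta>" using e0 b1 by (simp add: real_root_pos2)
  finally show "weil_height (complex_of_real \<beta>) \<le> \<beta>" unfolding wX .
  assume eq: "weil_height (complex_of_real \<beta>) = \<beta>"
  show "\<exists>a::nat. \<exists>b::rat. b > 0 \<and> \<beta> = real a powr real_of_rat b"
  proof (cases "\<beta> = 1")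
    case True
    then show ?thesis by (intro exI[of _ 1] exI[of _ 1], simp)
  next
    case False
    with b1 have b1': "\<beta> > 1" by simp
    have "X = root e X ^ e" using X0 e0 by (simp add: real_root_pow_pos2)
    then have Xe: "X = \<beta> ^ e" using eq wX by simp
    have allz: "cmod z = \<beta>" if z: "z \<in> R" for z
    proof (rule ccontr)
      assume "cmod z \<noteq> \<beta>"
      with zb[OF z] b1' have lt: "max 1 (cmod z) < \<beta>" by auto
      have "X = max 1 (cmod z) * (\<Prod>w\<in>R - {z}. max 1 (cmod w))"
        unfolding X_def using z H(5) by (simp add: prod.remove)
      also have "(\<Prod>w\<in>R - {z}. max 1 (cmod w)) \<le> (\<Prod>w\<in>R - {z}. \<beta>)"
        using fb by (intro prod_mono) auto
      hence "(\<Prod>w\<in>R - {z}. max 1 (cmod w)) \<le> \<beta> ^ card (R - {z})" by simp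
      hence "max 1 (cmod z) * (\<Prod>w\<in>R - {z}. max 1 (cmod w)) \<le> max 1 (cmod z) * \<beta> ^ card (R - {z})"
        by (simp add: mult_left_mono)
      also have "\<dots> < \<beta> * \<beta> ^ card (R - {z})" using lt b1' by (simp add: mult_strict_right_mono)
      also have "\<beta> * \<beta> ^ card (R - {z}) = \<beta> ^ e"
      proof -
        have ce: "card (R - {z}) = e - 1" using z H(5) unfolding e_def by (simp add: card_Diff_singleton)
        have "\<beta> * \<beta> ^ (e - 1) = \<beta> ^ e" using e0 by (metis Suc_diff_1 power_Suc)
        then show ?thesis unfolding ce .
      qed
      finally show False using Xe by simp
    qed
    have "of_int (coeff P 0) = poly (map_poly (of_int :: int \<Rightarrow> complex) P) 0" by (simp add: poly_0_coeff_0)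
    also have "\<dots> = (\<Prod>z\<in>R. - z)" unfolding H(6) by (simp add: poly_prod)
    finally have c0: "of_int (coeff P 0) = (\<Prod>z\<in>R. - z)" .
    have "real_of_int \<bar>coeff P 0\<bar> = cmod (of_int (coeff P 0))" by simp
    also have "\<dots> = (\<Prod>z\<in>R. cmod z)" unfolding c0 prod_norm[symmetric] by simp
    also have "\<dots> = \<beta> ^ e" using allz unfolding e_def by simp
    finally have ca: "real (nat \<bar>coeff P 0\<bar>) = \<beta> ^ e" by simp
    have "\<beta> = root e (\<beta> ^ e)" using e0 b1 by (simp add: real_root_pos2)
    also have "\<dots> = real (nat \<bar>coeff P 0\<bar>) powr (1 / real e)" unfolding ca[symmetric] using e0 by (simp add: root_powr_inverse)
    finally have "\<beta> = real (nat \<bar>coeff P 0\<bar>) powr real_of_rat (1 / of_nat e)" by (simp add: of_rat_divide)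
    moreover have "(1 / of_nat e :: rat) > 0" using e0 by simp
    ultimately show ?thesis by blast
  qed
qed

lemma height_eq:
  assumes b1: "\<beta> \<ge> 1" and ab: "\<beta> = real a powr real_of_rat b" and b0: "b > 0"
  shows "weil_height (complex_of_real \<beta>) = \<beta>"
proof -
  have a0: "a > 0" using ab b1 by (cases "a = 0", auto)
  obtain r t where rt: "quotient_of b = (r, t)" by (cases "quotient_of b")
  have t0: "t > 0" by (rule quotient_of_denom_pos[OF rt])
  have bq: "b = of_int r / of_int t" by (rule quotient_of_div[OF rt])
  have r0: "r > 0" using b0 t0 bq by (simp add: zero_less_divide_iff)
  have rb: "real_of_rat b = real_of_int r / real_of_int t" using bq by (simp add: of_rat_divide)
  define T where "T = nat t"
  define Rr where "Rr = nat r"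
  have T0: "T > 0" using t0 T_def by simp
  have bT: "\<beta> ^ T = real a ^ Rr"
  proof -
    have "\<beta> ^ T = \<beta> powr real T" using b1 by (simp add: powr_realpow)
    also have "\<dots> = real a powr (real_of_rat b * real T)" unfolding ab by (simp add: powr_powr)
    also have "real_of_rat b * real T = real Rr" using rb t0 r0 T_def Rr_def by simp
    also have "real a powr real Rr = real a ^ Rr" using a0 by (simp add: powr_realpow)
    finally show ?thesis .
  qed
  define Q :: "int poly" where "Q = monom 1 T + monom (- (int a ^ Rr)) 0"
  have dQ: "degree Q = T" unfolding Q_def using T0 by (simp add: degree_add_eq_left degree_monom_eq)
  have c0: "coeff (monom (- (int a ^ Rr)) 0) T = 0" using T0 by (simp add: coeff_monom)
  have Qm: "lead_coeff Q = 1" unfolding dQ unfolding Q_def coeff_add c0 by simp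
  have pQ: "poly (map_poly of_int Q) z = z ^ T - of_nat a ^ Rr" for z :: complex
    unfolding Q_def by (simp add: of_int_poly_hom.hom_add poly_monom map_poly_monom)
  have Qx: "poly (map_poly of_int Q) (complex_of_real \<beta>) = 0"
    unfolding pQ using bT by (metis of_real_of_nat_eq of_real_power right_minus_eq)
  define P where "P = min_int_poly (complex_of_real \<beta>)"
  define R where "R = {z. poly (map_poly (of_int :: int \<Rightarrow> complex) P) z = 0}"
  note H = height_monic[OF Qm Qx P_def, folded R_def]
  have allz: "cmod z = \<beta>" if z: "z \<in> R" for z
  proof -
    have "z ^ T = of_nat a ^ Rr" using H(2) z pQ by auto
    then have "cmod z ^ T = real a ^ Rr" by (metis norm_power norm_of_nat)
    then have "cmod z ^ T = \<beta> ^ T" using bT by simp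
    then show ?thesis by (rule power_eq_imp_eq_base) (use T0 b1 in auto)
  qed
  have "weil_height (complex_of_real \<beta>) = root (card R) (\<Prod>z\<in>R. max 1 (cmod z))" by (rule H(3))
  also have "(\<Prod>z\<in>R. max 1 (cmod z)) = \<beta> ^ card R" using allz b1 by simp
  also have "root (card R) (\<beta> ^ card R) = \<beta>" using H(4) b1 by (simp add: real_root_pos2)
  finally show ?thesis .
qed




lemma cnj_root: "poly (map_poly (of_int :: int \<Rightarrow> complex) P) (cnj z) = cnj (poly (map_poly of_int P) z)"
  by (simp add: poly_altdef cnj_sum)

theorem lemma9p2:
  fixes \<alpha> :: complex
  assumes "algebraic \<alpha>"
  shows "weil_height (complex_of_real (weil_height \<alpha>)) \<le> weil_height \<alpha> \<and>
         (weil_height (complex_of_real (weil_height \<alpha>)) = weil_height \<alpha> \<longleftrightarrow>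
          (\<exists>a::nat. \<exists>b::rat. b > 0 \<and> weil_height \<alpha> = real a powr real_of_rat b))"
proof -
  obtain q where q0: "q \<noteq> 0" and qa: "poly (map_poly of_int q) \<alpha> = 0" using alg_ipoly[OF assms] by blast
  define P where "P = min_int_poly \<alpha>"
  define R where "R = {z. poly (map_poly (of_int :: int \<Rightarrow> complex) P) z = 0}"
  note F = minpoly_facts[OF q0 qa P_def, folded R_def]
  define d where "d = degree P"
  define a0 where "a0 = lead_coeff P"
  have d0: "d > 0" using F(4) d_def by simp
  have a0pos: "a0 > 0" using F(2) a0_def by simp
  obtain as where as: "set as = R" "distinct as" using finite_distinct_list[OF F(5)] by blast
  have las: "length as = d" using as F(6) d_def distinct_card by metis
  define M where "M = real_of_int a0 * (\<Prod>z\<in>R. max 1 (cmod z))"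
  have wa: "weil_height \<alpha> = root d M"
    unfolding weil_height_def Let_def M_def d_def a0_def P_def R_def ..
  define K where "K = {i. i < d \<and> 1 < cmod (as ! i)}"
  define k where "k = card K"
  have Kk: "K \<in> ksubs d k" unfolding ksubs_def K_def k_def by auto
  define L where "L = (\<Prod>i\<in>K. as ! i)"
  have prodR: "(\<Prod>z\<in>R. max 1 (cmod z)) = (\<Prod>i=0..<d. max 1 (cmod (as!i)))"
    using prod_nth_distinct[OF as(2), of "\<lambda>z. max 1 (cmod z)"] as(1) las by simp
  have prodK: "(\<Prod>i=0..<d. max 1 (cmod (as!i))) = (\<Prod>i\<in>K. cmod (as!i))"
    by (rule prod.mono_neutral_cong_right) (auto simp: K_def)
  have cmodM: "cmod (of_int a0 * L) = M" unfolding M_def prodR prodK L_def using a0pos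
    by (simp add: prod_norm[symmetric] norm_mult)
  define S where "S = {z\<in>R. 1 < cmod z}"
  have KS: "(!) as ` K = S"
  proof
    show "(!) as ` K \<subseteq> S"
    proof
      fix z assume "z \<in> (!) as ` K"
      then obtain i where i: "i < d" "1 < cmod (as ! i)" "z = as ! i" unfolding K_def by auto
      then have "z \<in> R" using as(1) las nth_mem by metis
      then show "z \<in> S" using i unfolding S_def by simp
    qed
    show "S \<subseteq> (!) as ` K"
    proof
      fix z assume z: "z \<in> S"
      then have "z \<in> set as" using as(1) unfolding S_def by simp
      then obtain i where i: "i < length as" "as ! i = z" by (auto simp: in_set_conv_nth)
      then have "i \<in> K" using z las unfolding K_def S_def by auto
      then show "z \<in> (!) as ` K" using i by auto
    qed
  qed
  have injK: "inj_on ((!) as) K" using as(2) las by (auto simp: K_def inj_on_def nth_eq_iff_index_eq)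
  have LS: "L = (\<Prod>z\<in>S. z)" unfolding L_def KS[symmetric] using prod.reindex[OF injK, of "\<lambda>z. z"] by simp
  have cnjR: "cnj z \<in> R" if "z \<in> R" for z using that cnj_root[of P z] unfolding R_def by simp
  have cS: "cnj ` S = S"
  proof
    show "cnj ` S \<subseteq> S" using cnjR unfolding S_def by auto
    show "S \<subseteq> cnj ` S"
    proof
      fix z assume "z \<in> S"
      then have "cnj z \<in> S" using cnjR unfolding S_def by auto
      then show "z \<in> cnj ` S" by (metis complex_cnj_cnj image_eqI)
    qed
  qed
  have injc: "inj_on cnj S" by (auto simp: inj_on_def)
  have "cnj L = (\<Prod>z\<in>S. cnj z)" unfolding LS by (simp add: cnj_prod)
  also have "\<dots> = (\<Prod>z\<in>cnj ` S. z)" using prod.reindex[OF injc, of "\<lambda>z. z"] by simp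
  also have "\<dots> = L" unfolding cS LS ..
  finally have cL: "cnj L = L" .
  have "Im (cnj L) = Im L" by (subst cL, rule refl)
  then have ImL: "Im L = 0" by simp
  define r where "r = real_of_int a0 * Re L"
  have Lr: "of_int a0 * L = complex_of_real r" unfolding r_def using ImL by (simp add: complex_eq_iff)
  have rM: "\<bar>r\<bar> = M" using cmodM unfolding Lr by simp
  define s :: int where "s = (if r \<ge> 0 then 1 else -1)"
  have sM: "of_int (s * a0) * L = complex_of_real M"
  proof (cases "r \<ge> 0")
    case True
    then show ?thesis using Lr rM unfolding s_def by simp
  next
    case False
    then have "M = - r" using rM by simp
    then show ?thesis using Lr False unfolding s_def by simp
  qed
  have degas: "degree P = length as" using las d_def by simp
  have las0: "length as > 0" using las d0 by simp
  have rootas: "\<forall>x\<in>set as. poly (map_poly of_int P) x = 0" using as(1) unfolding R_def by simp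
  define Ps where "Ps = char_poly (Bint P (length as) k s)"
  note CC = compound_charpoly[OF degas las0 as(2) rootas, of k s, folded Ps_def, unfolded las]
  have PsM: "poly (map_poly of_int Ps) (complex_of_real M) = 0"
    unfolding CC(2)
  proof (rule bexI[OF _ Kk])
    show "complex_of_real M = of_int (s * lead_coeff P) * (\<Prod>x\<in>K. as ! x)" using sM unfolding L_def a0_def by simp
  qed
  have prod_ge: "(\<Prod>x\<in>K'. max 1 (cmod (as ! x))) \<le> (\<Prod>i=0..<d. max 1 (cmod (as!i)))" if K': "K' \<in> ksubs d k" for K'
  proof -
    have sub: "K' \<subseteq> {0..<d}" using K' unfolding ksubs_def by auto
    have "(\<Prod>i=0..<d. max 1 (cmod (as!i))) = (\<Prod>i\<in>{0..<d} - K'. max 1 (cmod (as!i))) * (\<Prod>x\<in>K'. max 1 (cmod (as ! x)))"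
      by (rule prod.subset_diff[OF sub], simp)
    moreover have A1: "(\<Prod>i\<in>{0..<d} - K'. max 1 (cmod (as!i))) \<ge> 1" by (rule prod_ge_1, auto)
    moreover have B0: "(\<Prod>x\<in>K'. max 1 (cmod (as ! x))) \<ge> 0" by (rule prod_nonneg, auto)
    moreover note mult_right_mono[OF A1 B0]
    ultimately show ?thesis by simp
  qed
  have Psb: "cmod w \<le> M" if w: "poly (map_poly of_int Ps) w = 0" for w
  proof -
    from w[unfolded CC(2)] obtain K' where K': "K' \<in> ksubs d k" and wK: "w = of_int (s * lead_coeff P) * (\<Prod>x\<in>K'. as ! x)" by blast
    have "cmod w = real_of_int a0 * (\<Prod>x\<in>K'. cmod (as ! x))"
      unfolding wK a0_def[symmetric] using a0pos by (simp add: norm_mult prod_norm[symmetric] s_def abs_mult)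
    also have "(\<Prod>x\<in>K'. cmod (as ! x)) \<le> (\<Prod>x\<in>K'. max 1 (cmod (as ! x)))" by (rule prod_mono, auto)
    also have "\<dots> \<le> (\<Prod>i=0..<d. max 1 (cmod (as!i)))" by (rule prod_ge[OF K'])
    finally show ?thesis unfolding M_def prodR using a0pos by (simp add: mult_left_mono)
  qed
  have M1: "M \<ge> 1"
  proof -
    have "(\<Prod>z\<in>R. max 1 (cmod z)) \<ge> 1" by (rule prod_ge_1, auto)
    moreover have "real_of_int a0 \<ge> 1" using a0pos by simp
    ultimately have "1 * 1 \<le> real_of_int a0 * (\<Prod>z\<in>R. max 1 (cmod z))"
      by (intro mult_mono) auto
    then show ?thesis unfolding M_def by simp
  qed
  define \<beta> where "\<beta> = root d M"
  have "root d 1 \<le> root d M" using M1 d0 by (simp only: real_root_le_iff)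
  then have b1: "\<beta> \<ge> 1" unfolding \<beta>_def real_root_one[OF d0] .
  have bd: "\<beta> ^ d = M" unfolding \<beta>_def using M1 d0 by (simp add: real_root_pow_pos2)
  define Q where "Q = pcompose Ps (monom 1 d)"
  have dm: "degree (monom (1::int) d) > 0" using d0 by (simp add: degree_monom_eq)
  have lm: "lead_coeff (monom (1::int) d) = 1" by (simp add: degree_monom_eq)
  have Qm: "lead_coeff Q = 1" unfolding Q_def lead_coeff_comp[OF dm] lm CC(1) by simp
  have pQ: "poly (map_poly of_int Q) z = poly (map_poly of_int Ps) (z ^ d)" for z :: complex
    unfolding Q_def by (simp add: of_int_hom.map_poly_pcompose poly_pcompose map_poly_monom poly_monom)
  have Qb: "poly (map_poly of_int Q) (complex_of_real \<beta>) = 0"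
    unfolding pQ using PsM bd by (metis of_real_power)
  have Qbnd: "cmod z \<le> \<beta>" if z: "poly (map_poly of_int Q) z = 0" for z
  proof -
    have "cmod (z ^ d) \<le> M" using Psb z unfolding pQ by blast
    then have "cmod z ^ Suc (d - 1) \<le> \<beta> ^ Suc (d - 1)" using bd d0 by (simp add: norm_power)
    then show ?thesis by (rule power_le_imp_le_base) (use b1 in auto)
  qed
  note HL = height_le[OF b1 Qm Qb Qbnd]
  have wb: "weil_height \<alpha> = \<beta>" unfolding wa \<beta>_def ..
  show ?thesis unfolding wb using HL height_eq[OF b1] by blast
qed


end
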